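(* In a monotonous quiver, a phylogenetic vertex $X$ has exactly $h(X)$ isotypy classes of critical ancestors.
   Context: A quiver consists of a class of vertices and, for each ordered pair of vertices $(A,B)$, a set of edges $A\to B$ (loops and multiple edges allowed). An evolution of length $m\ge 0$ is a sequence $A_0\leftarrow A_1\leftarrow\cdots\leftarrow A_m$ of vertices together with edges $A_k\to A_{k-1}$ ($1\le k\le m$); $A_0$ is its initial and $A_m$ its terminal vertex. Write $A\le B$ ($A$ is an ancestor of $B$) if there is an evolution with initial vertex $A$ and terminal vertex $B$; $A,B$ are isotypic ($A\sim B$) if $A\le B$ and $B\le A$. A vertex $A$ is primitive if every ancestor of $A$ is isotypic to $A$. A full evolution for $X$ is an evolution with primitive initial vertex and terminal vertex $X$. The height $h(X)$ is the smallest length of a full evolution for $X$ ($\infty$ if none). A vertex $A_k$ ($0\le k<m$) of an evolution $A_0\leftarrow\cdots\leftarrow A_m$ is critical if $h(A_k)<\infty$ and $h(A_{k+1})=h(A_k)+1$. The critical ancestors of a vertex $B$ are the critical vertices of full evolutions terminating at $B$. An evolution $\alpha=(A_0\leftarrow\cdots\leftarrow A_m)$ embeds in $\beta=(B_0\leftarrow\cdots\leftarrow B_n)$ if $m\le n$ and there are $0\le r_0<\cdots<r_m\le n$ with $A_k\sim B_{r_k}$. A universal evolution for $X$ is a full evolution for $X$ embedding in every full evolution for $X$; $X$ is phylogenetic if one exists. A quiver is monotonous if $h(A)\ge h(B)$ for every edge $A\to B$. *)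

theory Defs
  imports Main "HOL-Library.Extended_Nat"
begin

text \<open>An evolution A_0 <- A_1 <- ... <- A_m is a nonempty vertex list As
  (As!k = A_k, m = length As - 1) together with an edge list es of length m,
  where es!(k-1) is an edge A_k -> A_(k-1).\<close>

definition evolution :: "('e \<Rightarrow> 'v) \<Rightarrow> ('e \<Rightarrow> 'v) \<Rightarrow> 'v list \<Rightarrow> 'e list \<Rightarrow> bool" where
  "evolution src tgt As es \<longleftrightarrow> As \<noteq> [] \<and> length es = length As - 1 \<and>
     (\<forall>k. 1 \<le> k \<and> k < length As \<longrightarrow>
        src (es ! (k - 1)) = As ! k \<and> tgt (es ! (k - 1)) = As ! (k - 1))"

definition evol :: "('e \<Rightarrow> 'v) \<Rightarrow> ('e \<Rightarrow> 'v) \<Rightarrow> 'v list \<Rightarrow> bool" where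
  "evol src tgt As \<longleftrightarrow> (\<exists>es. evolution src tgt As es)"

definition ancestor :: "('e \<Rightarrow> 'v) \<Rightarrow> ('e \<Rightarrow> 'v) \<Rightarrow> 'v \<Rightarrow> 'v \<Rightarrow> bool" where
  "ancestor src tgt A B \<longleftrightarrow> (\<exists>As. evol src tgt As \<and> hd As = A \<and> last As = B)"

definition isotypic :: "('e \<Rightarrow> 'v) \<Rightarrow> ('e \<Rightarrow> 'v) \<Rightarrow> 'v \<Rightarrow> 'v \<Rightarrow> bool" where
  "isotypic src tgt A B \<longleftrightarrow> ancestor src tgt A B \<and> ancestor src tgt B A"

definition primitive :: "('e \<Rightarrow> 'v) \<Rightarrow> ('e \<Rightarrow> 'v) \<Rightarrow> 'v \<Rightarrow> bool" where
  "primitive src tgt A \<longleftrightarrow> (\<forall>B. ancestor src tgt B A \<longrightarrow> isotypic src tgt B A)"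

definition full_evol :: "('e \<Rightarrow> 'v) \<Rightarrow> ('e \<Rightarrow> 'v) \<Rightarrow> 'v list \<Rightarrow> 'v \<Rightarrow> bool" where
  "full_evol src tgt As X \<longleftrightarrow> evol src tgt As \<and> primitive src tgt (hd As) \<and> last As = X"

text \<open>Height: least length of a full evolution; infinity (top of enat) if none.\<close>
definition height :: "('e \<Rightarrow> 'v) \<Rightarrow> ('e \<Rightarrow> 'v) \<Rightarrow> 'v \<Rightarrow> enat" where
  "height src tgt X = (INF As \<in> {As. full_evol src tgt As X}. enat (length As - 1))"

definition critical :: "('e \<Rightarrow> 'v) \<Rightarrow> ('e \<Rightarrow> 'v) \<Rightarrow> 'v list \<Rightarrow> nat \<Rightarrow> bool" where
  "critical src tgt As k \<longleftrightarrow> k < length As - 1 \<and> height src tgt (As ! k) < \<infinity> \<and>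
     height src tgt (As ! Suc k) = height src tgt (As ! k) + 1"

definition critical_ancestors :: "('e \<Rightarrow> 'v) \<Rightarrow> ('e \<Rightarrow> 'v) \<Rightarrow> 'v \<Rightarrow> 'v set" where
  "critical_ancestors src tgt B =
     {As ! k | As k. full_evol src tgt As B \<and> critical src tgt As k}"

definition embeds :: "('e \<Rightarrow> 'v) \<Rightarrow> ('e \<Rightarrow> 'v) \<Rightarrow> 'v list \<Rightarrow> 'v list \<Rightarrow> bool" where
  "embeds src tgt \<alpha> \<beta> \<longleftrightarrow> length \<alpha> \<le> length \<beta> \<and>
     (\<exists>r. strict_mono_on {..<length \<alpha>} r \<and>
        (\<forall>k < length \<alpha>. r k < length \<beta> \<and> isotypic src tgt (\<alpha> ! k) (\<beta> ! r k)))"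

definition universal_evol :: "('e \<Rightarrow> 'v) \<Rightarrow> ('e \<Rightarrow> 'v) \<Rightarrow> 'v list \<Rightarrow> 'v \<Rightarrow> bool" where
  "universal_evol src tgt As X \<longleftrightarrow> full_evol src tgt As X \<and>
     (\<forall>Bs. full_evol src tgt Bs X \<longrightarrow> embeds src tgt As Bs)"

definition phylogenetic :: "('e \<Rightarrow> 'v) \<Rightarrow> ('e \<Rightarrow> 'v) \<Rightarrow> 'v \<Rightarrow> bool" where
  "phylogenetic src tgt X \<longleftrightarrow> (\<exists>As. universal_evol src tgt As X)"

definition monotonous :: "('e \<Rightarrow> 'v) \<Rightarrow> ('e \<Rightarrow> 'v) \<Rightarrow> bool" where
  "monotonous src tgt \<longleftrightarrow> (\<forall>e. height src tgt (src e) \<ge> height src tgt (tgt e))"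

definition isotypy_class :: "('e \<Rightarrow> 'v) \<Rightarrow> ('e \<Rightarrow> 'v) \<Rightarrow> 'v \<Rightarrow> 'v set" where
  "isotypy_class src tgt A = {B. isotypic src tgt A B}"

end

theory Submission
  imports Defs
begin

lemma evol_iff:
  "evol src tgt As \<longleftrightarrow> As \<noteq> [] \<and>
     (\<forall>k. Suc k < length As \<longrightarrow> (\<exists>e. src e = As ! Suc k \<and> tgt e = As ! k))"
proof
  assume "evol src tgt As"
  then obtain es where E: "evolution src tgt As es" by (auto simp: evol_def)
  show "As \<noteq> [] \<and> (\<forall>k. Suc k < length As \<longrightarrow> (\<exists>e. src e = As ! Suc k \<and> tgt e = As ! k))"
  proof (intro conjI allI impI)
    show "As \<noteq> []" using E by (simp add: evolution_def)
    fix k assume "Suc k < length As"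
    moreover have "\<forall>k. 1 \<le> k \<and> k < length As \<longrightarrow> src (es ! (k - 1)) = As ! k \<and> tgt (es ! (k - 1)) = As ! (k - 1)"
      using E unfolding evolution_def by (elim conjE)
    ultimately have "src (es ! (Suc k - 1)) = As ! Suc k \<and> tgt (es ! (Suc k - 1)) = As ! (Suc k - 1)"
      by (metis Suc_le_mono le0 One_nat_def)
    then show "\<exists>e. src e = As ! Suc k \<and> tgt e = As ! k" by auto
  qed
next
  assume H: "As \<noteq> [] \<and> (\<forall>k. Suc k < length As \<longrightarrow> (\<exists>e. src e = As ! Suc k \<and> tgt e = As ! k))"
  define es where "es = map (\<lambda>k. SOME e. src e = As ! Suc k \<and> tgt e = As ! k) [0..<length As - 1]"
  have "evolution src tgt As es"
    unfolding evolution_def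
  proof (intro conjI allI impI)
    show "As \<noteq> []" using H by simp
    show "length es = length As - 1" by (simp add: es_def)
    fix k assume k: "1 \<le> k \<and> k < length As"
    then have k2: "Suc (k - 1) < length As" by simp
    have k3: "k - 1 < length As - 1" using k by linarith
    have "es ! (k - 1) = (SOME e. src e = As ! Suc (k-1) \<and> tgt e = As ! (k-1))"
      using k3 by (simp add: es_def)
    moreover have "\<exists>e. src e = As ! Suc (k-1) \<and> tgt e = As ! (k-1)" using H k2 by blast
    ultimately have "src (es ! (k - 1)) = As ! Suc (k-1) \<and> tgt (es ! (k - 1)) = As ! (k-1)"
      by (metis (mono_tags, lifting) someI_ex)
    then show "src (es ! (k - 1)) = As ! k" "tgt (es ! (k - 1)) = As ! (k - 1)" using k by auto
  qed
  then show "evol src tgt As" by (auto simp: evol_def)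
qed

lemma evol_single: "evol src tgt [A]"
  by (simp add: evol_iff)

lemma evol_take: "evol src tgt As \<Longrightarrow> 0 < m \<Longrightarrow> evol src tgt (take m As)"
  by (auto simp: evol_iff)

lemma evol_drop: "evol src tgt As \<Longrightarrow> i < length As \<Longrightarrow> evol src tgt (drop i As)"
  unfolding evol_iff
proof (intro conjI allI impI)
  assume "As \<noteq> [] \<and> (\<forall>k. Suc k < length As \<longrightarrow> (\<exists>e. src e = As ! Suc k \<and> tgt e = As ! k))" "i < length As"
  then show "drop i As \<noteq> []" by simp
  fix k assume H: "As \<noteq> [] \<and> (\<forall>k. Suc k < length As \<longrightarrow> (\<exists>e. src e = As ! Suc k \<and> tgt e = As ! k))" "i < length As"
    and k: "Suc k < length (drop i As)"
  then have "Suc (i + k) < length As" by simp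
  then obtain e where "src e = As ! Suc (i+k)" "tgt e = As ! (i+k)" using H by blast
  then show "\<exists>e. src e = drop i As ! Suc k \<and> tgt e = drop i As ! k" using k by auto
qed

lemma evol_append:
  assumes A: "evol src tgt As" and B: "evol src tgt Bs" and L: "last As = hd Bs"
  shows "evol src tgt (As @ tl Bs)"
  unfolding evol_iff
proof (intro conjI allI impI)
  show "As @ tl Bs \<noteq> []" using A by (simp add: evol_iff)
  fix k assume k: "Suc k < length (As @ tl Bs)"
  have An: "As \<noteq> []" and Bn: "Bs \<noteq> []" using A B by (auto simp: evol_iff)
  show "\<exists>e. src e = (As @ tl Bs) ! Suc k \<and> tgt e = (As @ tl Bs) ! k"
  proof (cases "Suc k < length As")
    case True
    then have "\<exists>e. src e = As ! Suc k \<and> tgt e = As ! k" using A unfolding evol_iff by blast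
    then show ?thesis using True by (simp add: nth_append)
  next
    case False
    then have k1: "length As \<le> Suc k" by simp
    define i where "i = Suc k - length As"
    have i1: "Suc i < length Bs" using k k1 An Bn by (auto simp: i_def)
    have "(As @ tl Bs) ! Suc k = Bs ! Suc i"
      using k1 i1 by (simp add: nth_append i_def nth_tl)
    moreover have "(As @ tl Bs) ! k = Bs ! i"
    proof (cases "Suc k = length As")
      case True
      then have kk: "k = length As - 1" by simp
      then have "(As @ tl Bs) ! k = last As" using An True by (simp add: nth_append last_conv_nth)
      then show ?thesis using L True Bn by (simp add: i_def hd_conv_nth)
    next
      case False
      then show ?thesis using k1 i1 by (simp add: nth_append i_def nth_tl Suc_diff_le)
    qed
    moreover have "\<exists>e. src e = Bs ! Suc i \<and> tgt e = Bs ! i" using B i1 unfolding evol_iff by blast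
    ultimately show ?thesis by simp
  qed
qed


lemma evol_ne: "evol src tgt As \<Longrightarrow> As \<noteq> []" by (simp add: evol_iff)

lemma evol_step: "evol src tgt As \<Longrightarrow> Suc k < length As \<Longrightarrow> \<exists>e. src e = As ! Suc k \<and> tgt e = As ! k"
  by (simp add: evol_iff)

lemma ancestor_refl: "ancestor src tgt A A"
  unfolding ancestor_def using evol_single by fastforce

lemma evol_ancestor:
  assumes E: "evol src tgt As" and ij: "i \<le> j" "j < length As"
  shows "ancestor src tgt (As ! i) (As ! j)"
proof -
  let ?L = "take (Suc (j - i)) (drop i As)"
  have "evol src tgt ?L" using E ij by (intro evol_take evol_drop) auto
  moreover have "hd ?L = As ! i" using ij by (simp add: hd_conv_nth)
  moreover have "last ?L = As ! j"
  proof -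
    have len: "length ?L = Suc (j - i)" using ij by simp
    then have "last ?L = ?L ! (j - i)" by (metis diff_Suc_1 last_conv_nth list.size(3) nat.simps(3))
    also have "\<dots> = As ! j" using ij by simp
    finally show ?thesis .
  qed
  ultimately show ?thesis unfolding ancestor_def by blast
qed

lemma ancestor_trans:
  assumes "ancestor src tgt A B" "ancestor src tgt B C"
  shows "ancestor src tgt A C"
proof -
  obtain As Bs where "evol src tgt As" "hd As = A" "last As = B" "evol src tgt Bs" "hd Bs = B" "last Bs = C"
    using assms unfolding ancestor_def by blast
  moreover then have "evol src tgt (As @ tl Bs)" by (intro evol_append) auto
  moreover have "hd (As @ tl Bs) = A" using \<open>evol src tgt As\<close> \<open>hd As = A\<close> evol_ne by fastforce
  moreover have "last (As @ tl Bs) = C"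
  proof (cases "tl Bs = []")
    case True
    have "Bs \<noteq> []" using \<open>evol src tgt Bs\<close> evol_ne by blast
    then have "Bs = [hd Bs]" using True by (metis list.collapse)
    then have "C = B" using \<open>last Bs = C\<close> \<open>hd Bs = B\<close> by (metis last.simps)
    then show ?thesis using True \<open>last As = B\<close> by simp
  next
    case False
    then have "last (tl Bs) = last Bs" by (simp add: last_tl)
    then show ?thesis using False \<open>last Bs = C\<close> by simp
  qed
  ultimately show ?thesis unfolding ancestor_def by blast
qed

lemma isotypic_refl: "isotypic src tgt A A" by (simp add: isotypic_def ancestor_refl)
lemma isotypic_sym: "isotypic src tgt A B \<Longrightarrow> isotypic src tgt B A" by (simp add: isotypic_def)
lemma isotypic_trans: "isotypic src tgt A B \<Longrightarrow> isotypic src tgt B C \<Longrightarrow> isotypic src tgt A C"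
  unfolding isotypic_def using ancestor_trans by metis

lemma height_le: "full_evol src tgt As X \<Longrightarrow> height src tgt X \<le> enat (length As - 1)"
  unfolding height_def by (rule INF_lower) simp

lemma height_attained:
  assumes "height src tgt X \<noteq> \<infinity>"
  shows "\<exists>As. full_evol src tgt As X \<and> height src tgt X = enat (length As - 1)"
proof -
  let ?S = "(\<lambda>As. enat (length As - 1)) ` {As. full_evol src tgt As X}"
  have HI: "height src tgt X = Inf ?S" unfolding height_def by simp
  have "?S \<noteq> {}"
  proof
    assume "?S = {}"
    then have "height src tgt X = \<infinity>" using HI by (simp only: Inf_enat_def) simp
    then show False using assms by simp
  qed
  then have "\<exists>x. x \<in> ?S" by blast
  then have "(LEAST x. x \<in> ?S) \<in> ?S" by (rule LeastI_ex)
  then have "height src tgt X \<in> ?S" using HI \<open>?S \<noteq> {}\<close> by (simp only: Inf_enat_def if_False)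
  then show ?thesis by auto
qed

lemma primitive_height: "primitive src tgt A \<Longrightarrow> height src tgt A = 0"
proof -
  assume "primitive src tgt A"
  then have "full_evol src tgt [A] A" by (simp add: full_evol_def evol_single)
  from height_le[OF this] have "height src tgt A \<le> 0" by (simp add: zero_enat_def)
  then show ?thesis by simp
qed

lemma step_height:
  assumes "src e = B" "tgt e = A"
  shows "height src tgt B \<le> height src tgt A + 1"
proof (cases "height src tgt A = \<infinity>")
  case True then show ?thesis by simp
next
  case False
  then obtain As where F: "full_evol src tgt As A" and H: "height src tgt A = enat (length As - 1)"
    using height_attained[OF False] by (elim exE conjE)
  have E2: "evol src tgt [A, B]" using assms by (auto simp: evol_iff)
  have Ev: "evol src tgt As" using F by (simp add: full_evol_def)
  then have N: "As \<noteq> []" by (rule evol_ne)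
  have "evol src tgt (As @ tl [A, B])" using F E2 by (intro evol_append) (auto simp: full_evol_def)
  then have "full_evol src tgt (As @ [B]) B" using F N by (auto simp: full_evol_def)
  from height_le[OF this] have "height src tgt B \<le> enat (length As)" by simp
  also have "\<dots> = height src tgt A + 1" using H N by (cases As) (auto simp: one_enat_def)
  finally show ?thesis .
qed

lemma mono_step:
  assumes "monotonous src tgt" "src e = B" "tgt e = A"
  shows "height src tgt A \<le> height src tgt B"
  using assms unfolding monotonous_def by metis

lemma evol_mono:
  assumes M: "monotonous src tgt" and E: "evol src tgt As" and ij: "i \<le> j" "j < length As"
  shows "height src tgt (As ! i) \<le> height src tgt (As ! j)"
  using ij
proof (induction j rule: dec_induct)
  case base then show ?case by simp
next
  case (step n)
  obtain e where "src e = As ! Suc n" "tgt e = As ! n" using evol_step[OF E] step by blast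
  then have "height src tgt (As ! n) \<le> height src tgt (As ! Suc n)" using mono_step[OF M] by blast
  with step show ?case by simp
qed

lemma ancestor_height:
  assumes M: "monotonous src tgt" and A: "ancestor src tgt A B"
  shows "height src tgt A \<le> height src tgt B"
proof -
  obtain As where E: "evol src tgt As" "hd As = A" "last As = B" using A unfolding ancestor_def by blast
  have N: "As \<noteq> []" using E evol_ne by blast
  have "height src tgt (As ! 0) \<le> height src tgt (As ! (length As - 1))"
    using evol_mono[OF M E(1)] N by simp
  then show ?thesis using E N by (simp add: hd_conv_nth last_conv_nth)
qed

lemma isotypic_height:
  "monotonous src tgt \<Longrightarrow> isotypic src tgt A B \<Longrightarrow> height src tgt A = height src tgt B"
  unfolding isotypic_def using ancestor_height by (metis order_antisym)

lemma height_prefix: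
  assumes F: "full_evol src tgt As X" and i: "i < length As"
  shows "height src tgt (As ! i) \<le> enat i"
proof -
  have Ev: "evol src tgt (take (Suc i) As)" using F by (simp add: full_evol_def evol_take)
  have N: "As \<noteq> []" using i by auto
  have "hd (take (Suc i) As) = hd As" using N by (cases As) auto
  moreover have "last (take (Suc i) As) = As ! i"
  proof -
    have len: "length (take (Suc i) As) = Suc i" using i by simp
    then have "last (take (Suc i) As) = take (Suc i) As ! i" by (metis diff_Suc_1 last_conv_nth list.size(3) nat.simps(3))
    also have "\<dots> = As ! i" using i by simp
    finally show ?thesis .
  qed
  ultimately have "full_evol src tgt (take (Suc i) As) (As ! i)"
    using F Ev by (simp add: full_evol_def)
  from height_le[OF this] show ?thesis using i by simp
qed


lemma crit_exists:
  assumes M: "monotonous src tgt"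
  shows "evol src tgt As \<Longrightarrow> height src tgt (hd As) = enat a \<Longrightarrow> height src tgt (last As) = enat b
    \<Longrightarrow> a \<le> j \<Longrightarrow> j < b \<Longrightarrow>
    \<exists>k. Suc k < length As \<and> height src tgt (As ! k) = enat j \<and> height src tgt (As ! Suc k) = enat (Suc j)"
proof (induction As arbitrary: a)
  case Nil then show ?case by (simp add: evol_iff)
next
  case (Cons A As')
  show ?case
  proof (cases "As' = []")
    case True then show ?thesis using Cons.prems by simp
  next
    case False
    have E': "evol src tgt As'" using evol_drop[OF Cons.prems(1), of 1] False by simp
    obtain e where e: "src e = (A # As') ! Suc 0" "tgt e = (A # As') ! 0"
      using evol_step[OF Cons.prems(1), of 0] False by auto
    then have e2: "src e = hd As'" "tgt e = A" using False by (auto simp: hd_conv_nth)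
    have ha: "height src tgt A = enat a" using Cons.prems by simp
    have lo: "enat a \<le> height src tgt (hd As')" using mono_step[of src tgt e "hd As'" A, OF M e2] ha by simp
    have up: "height src tgt (hd As') \<le> enat (Suc a)"
      using step_height[of src e "hd As'" tgt A, OF e2] ha by (simp add: eSuc_enat[symmetric] eSuc_plus_1)
    obtain c where hc: "height src tgt (hd As') = enat c"
      using up by (cases "height src tgt (hd As')") auto
    have cc: "c = a \<or> c = Suc a" using lo up hc by auto
    have lastA: "height src tgt (last As') = enat b" using Cons.prems False by simp
    show ?thesis
    proof (cases "c = Suc a \<and> j = a")
      case True
      then have "Suc 0 < length (A # As') \<and> height src tgt ((A # As') ! 0) = enat j \<and>
          height src tgt ((A # As') ! Suc 0) = enat (Suc j)"
        using False ha hc by (simp add: hd_conv_nth)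
      then show ?thesis by blast
    next
      case F2: False
      then have "c \<le> j" using cc Cons.prems(4) by auto
      from Cons.IH[OF E' hc lastA this Cons.prems(5)] obtain k where
        "Suc k < length As'" "height src tgt (As' ! k) = enat j" "height src tgt (As' ! Suc k) = enat (Suc j)"
        by blast
      then have "Suc (Suc k) < length (A # As') \<and> height src tgt ((A # As') ! Suc k) = enat j \<and>
          height src tgt ((A # As') ! Suc (Suc k)) = enat (Suc j)" by simp
      then show ?thesis by blast
    qed
  qed
qed


lemma key:
  assumes M: "monotonous src tgt" and U: "universal_evol src tgt U X"
    and t: "t < length U" "height src tgt (U ! t) = enat j"
    and F: "full_evol src tgt As X" and k: "Suc k < length As"
    and hk: "height src tgt (As ! k) = enat j" and hk1: "height src tgt (As ! Suc k) = enat (Suc j)"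
  shows "isotypic src tgt (U ! t) (As ! k)"
proof -
  obtain C where FC: "full_evol src tgt C (As ! k)" and HC: "height src tgt (As ! k) = enat (length C - 1)"
    using height_attained[of src tgt "As ! k"] hk by auto
  have EC: "evol src tgt C" using FC by (simp add: full_evol_def)
  have CN: "C \<noteq> []" using EC by (rule evol_ne)
  have LC: "length C = Suc j" using HC hk CN by (cases C) auto
  have lastC: "last C = As ! k" using FC by (simp add: full_evol_def)
  have EA: "evol src tgt As" using F by (simp add: full_evol_def)
  define D where "D = drop (Suc k) As"
  have DN: "D \<noteq> []" using k by (simp add: D_def)
  have ED: "evol src tgt (drop k As)" using evol_drop[OF EA] k by simp
  have hdD: "hd (drop k As) = As ! k" using k by (simp add: hd_drop_conv_nth)
  have tlD: "tl (drop k As) = D" by (simp add: D_def drop_Suc tl_drop)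
  define Cs where "Cs = C @ D"
  have ECs: "evol src tgt Cs" using evol_append[OF EC ED] lastC hdD tlD by (simp add: Cs_def)
  have hdCs: "hd Cs = hd C" using CN by (simp add: Cs_def)
  have lastCs: "last Cs = X"
  proof -
    have "last Cs = last D" using DN by (simp add: Cs_def)
    also have "\<dots> = last As" using k by (simp add: D_def)
    also have "\<dots> = X" using F by (simp add: full_evol_def)
    finally show ?thesis .
  qed
  have FCs: "full_evol src tgt Cs X" using ECs hdCs lastCs FC by (simp add: full_evol_def)
  have "embeds src tgt U Cs" using U FCs by (simp add: universal_evol_def)
  then obtain r where r: "\<forall>k < length U. r k < length Cs \<and> isotypic src tgt (U ! k) (Cs ! r k)"
    unfolding embeds_def by blast
  define s where "s = r t"
  have s1: "s < length Cs" and iso: "isotypic src tgt (U ! t) (Cs ! s)" using r t by (auto simp: s_def)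
  have hs: "height src tgt (Cs ! s) = enat j" using isotypic_height[OF M iso] t by simp
  have "s = j"
  proof (rule ccontr)
    assume "s \<noteq> j"
    then consider "s < j" | "j < s" by linarith
    then show False
    proof cases
      case 1
      then have "Cs ! s = C ! s" using LC by (simp add: Cs_def nth_append)
      moreover have "height src tgt (C ! s) \<le> enat s" using height_prefix[OF FC] 1 LC by simp
      ultimately show False using hs 1 by simp
    next
      case 2
      then have "Cs ! s = D ! (s - Suc j)" using LC by (simp add: Cs_def nth_append)
      also have "\<dots> = As ! (Suc k + (s - Suc j))"
      proof -
        have "Suc k + (s - Suc j) < length As" using s1 LC 2 k by (simp add: Cs_def D_def)
        then show ?thesis unfolding D_def by (simp add: nth_drop)
      qed
      finally have eq: "Cs ! s = As ! (Suc k + (s - Suc j))" .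
      have "Suc k + (s - Suc j) < length As" using s1 LC 2 by (simp add: Cs_def D_def)
      then have "height src tgt (As ! Suc k) \<le> height src tgt (As ! (Suc k + (s - Suc j)))"
        by (intro evol_mono[OF M EA]) auto
      then show False using eq hs hk1 by simp
    qed
  qed
  then have "Cs ! s = As ! k" using LC lastC CN by (simp add: Cs_def nth_append last_conv_nth)
  then show ?thesis using iso by simp
qed


lemma class_eq: "isotypic src tgt A B \<Longrightarrow> isotypy_class src tgt A = isotypy_class src tgt B"
proof -
  assume H: "isotypic src tgt A B"
  show ?thesis unfolding isotypy_class_def
  proof (intro set_eqI iffI; simp)
    fix C assume "isotypic src tgt A C"
    then show "isotypic src tgt B C" using isotypic_trans[OF isotypic_sym[OF H]] by blast
  next
    fix C assume "isotypic src tgt B C"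
    then show "isotypic src tgt A C" using isotypic_trans[OF H] by blast
  qed
qed

theorem corollary6p3:
  fixes src tgt :: "'e \<Rightarrow> 'v" and X :: 'v
  assumes "monotonous src tgt"
    and "phylogenetic src tgt X"
  shows "finite (isotypy_class src tgt ` critical_ancestors src tgt X) \<and>
         enat (card (isotypy_class src tgt ` critical_ancestors src tgt X)) = height src tgt X"
proof -
  note M = assms(1)
  obtain U where U: "universal_evol src tgt U X" using assms(2) by (auto simp: phylogenetic_def)
  have FU: "full_evol src tgt U X" using U by (simp add: universal_evol_def)
  have EU: "evol src tgt U" using FU by (simp add: full_evol_def)
  have UN: "U \<noteq> []" using EU by (rule evol_ne)
  have "height src tgt X \<le> enat (length U - 1)" using height_le[OF FU] .
  then obtain n where hn: "height src tgt X = enat n" by (cases "height src tgt X") auto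
  have h0: "height src tgt (hd U) = enat 0"
    using primitive_height[of src tgt "hd U"] FU by (simp add: full_evol_def zero_enat_def)
  have hl: "height src tgt (last U) = enat n" using FU hn by (simp add: full_evol_def)
  define P where "P = (\<lambda>j k. Suc k < length U \<and> height src tgt (U ! k) = enat j \<and> height src tgt (U ! Suc k) = enat (Suc j))"
  define pos where "pos = (\<lambda>j. SOME k. P j k)"
  define rep where "rep = (\<lambda>j. U ! pos j)"
  have Ppos: "P j (pos j)" if "j < n" for j
  proof -
    have "\<exists>k. P j k" using crit_exists[OF M EU h0 hl, of j] that by (simp add: P_def)
    then show ?thesis unfolding pos_def by (rule someI_ex)
  qed
  let ?CA = "critical_ancestors src tgt X"
  let ?cl = "isotypy_class src tgt"
  have repCA: "rep j \<in> ?CA" if "j < n" for j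
  proof -
    have "critical src tgt U (pos j)"
      using Ppos[OF that] unfolding P_def critical_def by (simp add: one_enat_def less_diff_conv)
    then show ?thesis using FU unfolding critical_ancestors_def rep_def by blast
  qed
  have eq: "?cl ` ?CA = (\<lambda>j. ?cl (rep j)) ` {..<n}"
  proof
    show "?cl ` ?CA \<subseteq> (\<lambda>j. ?cl (rep j)) ` {..<n}"
    proof
      fix x assume "x \<in> ?cl ` ?CA"
      then obtain B where xB: "x = ?cl B" and B: "B \<in> ?CA" by blast
      then obtain As k where BA: "B = As ! k" and FA: "full_evol src tgt As X" and cr: "critical src tgt As k"
        unfolding critical_ancestors_def by blast
      have k: "Suc k < length As" using cr unfolding critical_def by linarith
      obtain j where hj: "height src tgt (As ! k) = enat j"
        using cr by (cases "height src tgt (As ! k)") (auto simp: critical_def)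
      have hj1: "height src tgt (As ! Suc k) = enat (Suc j)"
        using cr hj by (simp add: critical_def one_enat_def)
      have EA: "evol src tgt As" using FA by (simp add: full_evol_def)
      have "height src tgt (As ! Suc k) \<le> height src tgt (As ! (length As - 1))"
        using k by (intro evol_mono[OF M EA]) auto
      also have "\<dots> = height src tgt X" using FA evol_ne[OF EA] by (simp add: full_evol_def last_conv_nth)
      finally have "Suc j \<le> n" using hj1 hn by simp
      then have jn: "j < n" by simp
      have PP: "P j (pos j)" using Ppos[OF jn] .
      have "isotypic src tgt (U ! pos j) (As ! k)"
        using PP by (intro key[OF M U _ _ FA k hj hj1]) (auto simp: P_def)
      then have "?cl B = ?cl (rep j)" using BA class_eq isotypic_sym unfolding rep_def by metis
      then show "x \<in> (\<lambda>j. ?cl (rep j)) ` {..<n}" using xB jn by blast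
    qed
  next
    show "(\<lambda>j. ?cl (rep j)) ` {..<n} \<subseteq> ?cl ` ?CA" using repCA by blast
  qed
  have inj: "inj_on (\<lambda>j. ?cl (rep j)) {..<n}"
  proof (rule inj_onI)
    fix i j assume i: "i \<in> {..<n}" and j: "j \<in> {..<n}" and e: "?cl (rep i) = ?cl (rep j)"
    have "rep j \<in> ?cl (rep j)" by (simp add: isotypy_class_def isotypic_refl)
    then have "rep j \<in> ?cl (rep i)" using e by simp
    then have "isotypic src tgt (rep i) (rep j)" by (simp add: isotypy_class_def)
    then have "height src tgt (rep i) = height src tgt (rep j)" by (rule isotypic_height[OF M])
    moreover have "height src tgt (rep i) = enat i" using Ppos i by (simp add: P_def rep_def)
    moreover have "height src tgt (rep j) = enat j" using Ppos j by (simp add: P_def rep_def)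
    ultimately show "i = j" by simp
  qed
  have "card (?cl ` ?CA) = n" unfolding eq using card_image[OF inj] by simp
  then show ?thesis unfolding eq using hn by simp
qed

end
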